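(* For all integers $n\geq1$ and all $i,j\in\mathbb N$ the following polynomial identities hold: \begin{align*} U_{n+i}U_{n+j}-U_{n-1}U_{n+1+i+j}&=U_iU_j,\\ T_{n+i}T_{n+j}-T_{n-1}T_{n+1+i+j}&=(1-x^2)U_iU_j,\\ T_{n+i}U_{n+j}-U_{n-1}T_{n+1+i+j}&=T_iU_j,\\ T_{n+i}U_{n+j}-T_{n-1}U_{n+1+i+j}&=-U_iT_{j+2},\\ T_{n+i}T_{n+j}-(x^2-1)U_{n-1}U_{n-1+i+j}&=T_iT_j. \end{align*}
   Context: $T_n=T_n(x)$ and $U_n=U_n(x)$ denote the Chebyshev polynomials of the first and second kind, defined by $T_0=1$, $T_1=x$, $T_{n+1}=2xT_n-T_{n-1}$ and $U_0=1$, $U_1=2x$, $U_{n+1}=2xU_n-U_{n-1}$ for $n\geq1$. *)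

theory Defs
  imports "HOL-Computational_Algebra.Polynomial"
begin

fun cheb_T :: "nat \<Rightarrow> 'a::comm_ring_1 poly" where
  "cheb_T 0 = 1"
| "cheb_T (Suc 0) = [:0, 1:]"
| "cheb_T (Suc (Suc n)) = [:0, 2:] * cheb_T (Suc n) - cheb_T n"

fun cheb_U :: "nat \<Rightarrow> 'a::comm_ring_1 poly" where
  "cheb_U 0 = 1"
| "cheb_U (Suc 0) = [:0, 2:]"
| "cheb_U (Suc (Suc n)) = [:0, 2:] * cheb_U (Suc n) - cheb_U n"

end

theory Submission
  imports Defs
begin

definition RR :: "('a::comm_ring_1 poly) \<Rightarrow> (nat \<Rightarrow> 'a poly) \<Rightarrow> bool" where
  "RR X s \<longleftrightarrow> (\<forall>k. s (Suc (Suc k)) = X * s (Suc k) - s k)"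

lemma RR_U: "RR [:0,2:] cheb_U" by (simp add: RR_def)
lemma RR_T: "RR [:0,2:] cheb_T" by (simp add: RR_def)

lemma RR_D: "RR X s \<Longrightarrow> s (Suc (Suc k)) = X * s (Suc k) - s k"
  by (simp add: RR_def)

lemma RR_uniq:
  assumes "RR X s" "RR X t" "s 0 = t 0" "s 1 = t 1"
  shows "s k = t k"
proof (induction k rule: cheb_U.induct)
  case 1 then show ?case using assms by simp
next
  case 2 then show ?case using assms by simp
next
  case (3 n) then show ?case using RR_D[OF assms(1), of n] RR_D[OF assms(2), of n] by simp
qed

lemma invar:
  fixes a b :: "nat \<Rightarrow> 'a::comm_ring_1 poly"
  assumes "RR X a" "RR X b"
  shows "a (Suc m) * b (Suc m + q) - a m * b (Suc (Suc m) + q) = a 1 * b (Suc q) - a 0 * b (Suc (Suc q))"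
proof (induction m)
  case 0 then show ?case by simp
next
  case (Suc m)
  have e1: "a (Suc (Suc m)) = X * a (Suc m) - a m" by (rule RR_D[OF assms(1)])
  have e2: "b (Suc (Suc (Suc m)) + q) = X * b (Suc (Suc m) + q) - b (Suc m + q)"
    using RR_D[OF assms(2), of "Suc m+q"] by simp
  have "a (Suc (Suc m)) * b (Suc (Suc m) + q) - a (Suc m) * b (Suc (Suc (Suc m)) + q)
      = a (Suc m) * b (Suc m + q) - a m * b (Suc (Suc m) + q)"
    by (simp only: e1 e2) (simp add: algebra_simps)
  then show ?case using Suc by simp
qed

lemma generic:
  fixes a b u :: "nat \<Rightarrow> 'a::comm_ring_1 poly"
  assumes "RR X a" "RR X b" "RR X u" "u 0 = 1" "u 1 = X"
  shows "a (Suc m + p) * b (Suc m + q) - a m * b (Suc (Suc m) + p + q)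
         = u p * (a 1 * b (Suc q) - a 0 * b (Suc (Suc q)))"
proof -
  define c where "c = a 1 * b (Suc q) - a 0 * b (Suc (Suc q))"
  define s where "s p = a (Suc m + p) * b (Suc m + q) - a m * b (Suc (Suc m) + p + q)" for p
  have s0: "s 0 = c" unfolding s_def c_def using invar[OF assms(1,2), of m q] by simp
  have s1: "s 1 = X * c"
  proof -
    have e1: "a (Suc (Suc m)) = X * a (Suc m) - a m" by (rule RR_D[OF assms(1)])
    have e2: "b (Suc (Suc (Suc m)) + q) = X * b (Suc (Suc m) + q) - b (Suc m + q)"
      using RR_D[OF assms(2), of "Suc m+q"] by simp
    have "s 1 = a (Suc (Suc m)) * b (Suc m + q) - a m * b (Suc (Suc (Suc m)) + q)"
      unfolding s_def by simp
    also have "\<dots> = X * (a (Suc m) * b (Suc m + q) - a m * b (Suc (Suc m) + q))"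
      by (simp only: e1 e2) (simp add: algebra_simps)
    finally show ?thesis using s0 unfolding s_def by simp
  qed
  have Rs: "RR X s"
    unfolding RR_def
  proof
    fix k
    have e1: "a (Suc m + Suc (Suc k)) = X * a (Suc m + Suc k) - a (Suc m + k)"
      using RR_D[OF assms(1), of "Suc m + k"] by simp
    have e2: "b (Suc (Suc m) + Suc (Suc k) + q) = X * b (Suc (Suc m) + Suc k + q) - b (Suc (Suc m) + k + q)"
      using RR_D[OF assms(2), of "Suc (Suc m) + k + q"] by simp
    show "s (Suc (Suc k)) = X * s (Suc k) - s k"
      unfolding s_def by (simp only: e1 e2) (simp add: algebra_simps)
  qed
  have Rt: "RR X (\<lambda>p. u p * c)"
    unfolding RR_def
  proof
    fix k show "u (Suc (Suc k)) * c = X * (u (Suc k) * c) - u k * c"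
      by (simp only: RR_D[OF assms(3)]) (simp add: algebra_simps)
  qed
  have "s p = u p * c"
    by (rule RR_uniq[OF Rs Rt]) (use s0 s1 assms(4,5) in auto)
  then show ?thesis unfolding s_def c_def .
qed


lemma RR_comb:
  assumes "RR X s" "RR X t"
  shows "RR X (\<lambda>k. c * s (k + d) - e * t (k + f))"
  unfolding RR_def
proof
  fix k
  have e1: "s (Suc (Suc k) + d) = X * s (Suc k + d) - s (k + d)"
    using RR_D[OF assms(1), of "k+d"] by simp
  have e2: "t (Suc (Suc k) + f) = X * t (Suc k + f) - t (k + f)"
    using RR_D[OF assms(2), of "k+f"] by simp
  show "c * s (Suc (Suc k) + d) - e * t (Suc (Suc k) + f) =
        X * (c * s (Suc k + d) - e * t (Suc k + f)) - (c * s (k + d) - e * t (k + f))"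
    by (simp only: e1 e2) (simp add: algebra_simps)
qed

lemma RR_mult: assumes "RR X s" shows "RR X (\<lambda>k. s k * c)"
  unfolding RR_def
proof
  fix k show "s (Suc (Suc k)) * c = X * (s (Suc k) * c) - s k * c"
    by (simp only: RR_D[OF assms]) (simp add: algebra_simps)
qed

lemma X2: "([:0,2:] :: 'a::comm_ring_1 poly) = [:0,1:] + [:0,1:]"
  by simp
lemma X2m: "([:0,2:] :: 'a::comm_ring_1 poly) * p = [:0,1:]*p + [:0,1:]*p"
  by (subst X2) (simp only: distrib_right)

lemma Ushift: "[:0,2:] * cheb_U (Suc j) - cheb_U (Suc (Suc j)) = (cheb_U j :: 'a::comm_ring_1 poly)"
  by simp
lemma Tshift: "[:0,2:] * cheb_T (Suc j) - cheb_T (Suc (Suc j)) = (cheb_T j :: 'a::comm_ring_1 poly)"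
  by simp

lemma T2aux: "[:0,1:] * cheb_T (Suc j) - cheb_T (Suc (Suc j))
   = (1 - [:0,1:]^2) * (cheb_U j :: 'a::comm_ring_1 poly)"
proof -
  have b0: "1 * cheb_T (0+0) - [:0,1:] * cheb_T (0+1) = cheb_U 0 * (1 - [:0,1:]^2 :: 'a poly)"
    by (simp add: power2_eq_square)
  have b1: "1 * cheb_T (1+0) - [:0,1:] * cheb_T (1+1) = cheb_U 1 * (1 - [:0,1:]^2 :: 'a poly)"
  proof -
    have "cheb_T (1+1) = [:0,2:] * [:0,1:] - (1::'a poly)" by (simp add: numeral_2_eq_2)
    moreover have "cheb_U 1 = ([:0,2:] :: 'a poly)" by simp
    ultimately show ?thesis unfolding X2m by (simp add: power2_eq_square algebra_simps del: mult_pCons_left mult_pCons_right)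
  qed
  have key: "1 * cheb_T (j+0) - [:0,1:] * cheb_T (j+1) = cheb_U j * (1 - [:0,1:]^2 :: 'a poly)"
    by (rule RR_uniq[OF RR_comb[OF RR_T RR_T] RR_mult[OF RR_U] b0 b1])
  have "cheb_T (Suc (Suc j)) = [:0,1:] * cheb_T (Suc j) + [:0,1:] * cheb_T (Suc j) - (cheb_T j :: 'a poly)"
    by (simp only: cheb_T.simps X2m)
  with key show ?thesis by (simp add: algebra_simps del: mult_pCons_left mult_pCons_right)
qed


lemma TU: "cheb_T (Suc k) = cheb_U (Suc k) - [:0,1:] * (cheb_U k :: 'a::comm_ring_1 poly)"
proof -
  have b0: "1 * cheb_U (0+1) - [:0,1:] * cheb_U (0+0) = 1 * cheb_T (0+1) - 0 * (cheb_T (0+0) :: 'a poly)"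
    unfolding X2m by simp
  have b1: "1 * cheb_U (1+1) - [:0,1:] * cheb_U (1+0) = 1 * cheb_T (1+1) - 0 * (cheb_T (1+0) :: 'a poly)"
    by (simp add: numeral_2_eq_2 X2m algebra_simps del: mult_pCons_left mult_pCons_right)
  have "1 * cheb_U (k+1) - [:0,1:] * cheb_U (k+0) = 1 * cheb_T (k+1) - 0 * (cheb_T (k+0) :: 'a poly)"
    by (rule RR_uniq[OF RR_comb[OF RR_U RR_U] RR_comb[OF RR_T RR_T] b0 b1])
  then show ?thesis by simp
qed

lemma T4aux: "[:0,1:] * cheb_U (Suc j) - cheb_U (Suc (Suc j)) = - (cheb_T (Suc (Suc j)) :: 'a::comm_ring_1 poly)"
  by (simp only: TU[of "Suc j"]) (simp add: algebra_simps)

lemma ids14: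
  fixes m i j :: nat
  shows "((cheb_U (Suc m+i) * cheb_U (Suc m+j) - cheb_U m * cheb_U (Suc (Suc m)+i+j)
            :: 'a::comm_ring_1 poly) = cheb_U i * cheb_U j) \<and>
         ((cheb_T (Suc m+i) * cheb_T (Suc m+j) - cheb_T m * cheb_T (Suc (Suc m)+i+j)
            :: 'a::comm_ring_1 poly) = (1 - [:0,1:]^2) * cheb_U i * cheb_U j) \<and>
         ((cheb_T (Suc m+i) * cheb_U (Suc m+j) - cheb_U m * cheb_T (Suc (Suc m)+i+j)
            :: 'a::comm_ring_1 poly) = cheb_T i * cheb_U j) \<and>
         ((cheb_T (Suc m+i) * cheb_U (Suc m+j) - cheb_T m * cheb_U (Suc (Suc m)+i+j)
            :: 'a::comm_ring_1 poly) = - (cheb_U i * cheb_T (j+2)))"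
proof (intro conjI)
  have T0: "cheb_T 0 = (1 :: 'a poly)" by simp
  have T1: "cheb_T 1 = ([:0,1:] :: 'a poly)" by simp
  have U0: "cheb_U 0 = (1 :: 'a poly)" by simp
  have U1: "cheb_U 1 = ([:0,2:] :: 'a poly)" by simp
  have G: "RR [:0,2:] a \<Longrightarrow> RR [:0,2:] b \<Longrightarrow>
     a (Suc m + p) * b (Suc m + q) - a m * b (Suc (Suc m) + p + q) =
     cheb_U p * (a 1 * b (Suc q) - a 0 * b (Suc (Suc q)))" for a b :: "nat \<Rightarrow> 'a poly" and p q
    by (rule generic[OF _ _ RR_U U0 U1])
  have idx: "Suc (Suc m) + j + i = Suc (Suc m) + i + j" by simp
  show "(cheb_U (Suc m+i) * cheb_U (Suc m+j) - cheb_U m * cheb_U (Suc (Suc m)+i+j)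
            :: 'a::comm_ring_1 poly) = cheb_U i * cheb_U j"
    by (simp only: G[OF RR_U RR_U] U0 U1 mult_1_left Ushift)
  show "(cheb_T (Suc m+i) * cheb_T (Suc m+j) - cheb_T m * cheb_T (Suc (Suc m)+i+j)
            :: 'a::comm_ring_1 poly) = (1 - [:0,1:]^2) * cheb_U i * cheb_U j"
    unfolding G[OF RR_T RR_T] T0 T1 mult_1_left T2aux by (simp only: ac_simps)
  show "(cheb_T (Suc m+i) * cheb_U (Suc m+j) - cheb_U m * cheb_T (Suc (Suc m)+i+j)
            :: 'a::comm_ring_1 poly) = cheb_T i * cheb_U j"
    using G[OF RR_U RR_T, of j i] unfolding idx U0 U1 mult_1_left Tshift
    by (simp only: ac_simps)
  show "(cheb_T (Suc m+i) * cheb_U (Suc m+j) - cheb_T m * cheb_U (Suc (Suc m)+i+j)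
            :: 'a::comm_ring_1 poly) = - (cheb_U i * cheb_T (j+2))"
    by (simp only: G[OF RR_T RR_U] T0 T1 mult_1_left T4aux mult_minus_right add_2_eq_Suc')
qed


lemma alg5:
  fixes u v x :: "'b::comm_ring_1"
  assumes C: "v*v - u*((x+x)*v-u) = 1"
  shows "(v-x*u)*(v-x*u) - (x*x-1)*u*u = 1"
    and "(v-x*u)*(((x+x)*v-u) - x*v) - (x*x-1)*u*v = x"
    and "(((x+x)*v-u) - x*v)*(v-x*u) - (x*x-1)*u*v = x"
    and "(((x+x)*v-u) - x*v)*(((x+x)*v-u) - x*v) - (x*x-1)*u*((x+x)*v-u) = x*x"
proof -
  have "(v-x*u)*(v-x*u) - (x*x-1)*u*u = v*v - u*((x+x)*v-u)" by (simp add: algebra_simps)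
  then show "(v-x*u)*(v-x*u) - (x*x-1)*u*u = 1" using C by simp
  have "(v-x*u)*(((x+x)*v-u) - x*v) - (x*x-1)*u*v = x * (v*v - u*((x+x)*v-u))" by (simp add: algebra_simps)
  then show "(v-x*u)*(((x+x)*v-u) - x*v) - (x*x-1)*u*v = x" using C by simp
  have "(((x+x)*v-u) - x*v)*(v-x*u) - (x*x-1)*u*v = x * (v*v - u*((x+x)*v-u))" by (simp add: algebra_simps)
  then show "(((x+x)*v-u) - x*v)*(v-x*u) - (x*x-1)*u*v = x" using C by simp
  have "(((x+x)*v-u) - x*v)*(((x+x)*v-u) - x*v) - (x*x-1)*u*((x+x)*v-u) = x*x * (v*v - u*((x+x)*v-u))" by (simp add: algebra_simps)
  then show "(((x+x)*v-u) - x*v)*(((x+x)*v-u) - x*v) - (x*x-1)*u*((x+x)*v-u) = x*x" using C by simp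
qed


lemma id5:
  fixes m i j :: nat
  shows "(cheb_T (Suc m+i) * cheb_T (Suc m+j) - ([:0,1:]^2 - 1) * cheb_U m * cheb_U (m+i+j)
            :: 'a::comm_ring_1 poly) = cheb_T i * cheb_T j"
proof -
  define x :: "'a poly" where "x = [:0,1:]"
  define u where "u = (cheb_U m :: 'a poly)"
  define v where "v = (cheb_U (Suc m) :: 'a poly)"
  define e where "e = (x^2 - 1) * u"
  have U0: "cheb_U 0 = (1 :: 'a poly)" by simp
  have U1: "cheb_U 1 = ([:0,2:] :: 'a poly)" by simp
  have T0: "cheb_T 0 = (1 :: 'a poly)" by simp
  have T1: "cheb_T 1 = x" by (simp add: x_def)
  have fU2: "cheb_U (Suc (Suc m)) = (x+x)*v - u"
    unfolding x_def u_def v_def by (simp only: cheb_U.simps X2m distrib_right)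
  have fT1: "cheb_T (Suc m) = v - x*u" unfolding x_def u_def v_def by (rule TU)
  have fT2: "cheb_T (Suc (Suc m)) = ((x+x)*v - u) - x*v"
    using TU[of "Suc m", where 'a='a] fU2 unfolding x_def v_def by simp
  have C: "v*v - u*((x+x)*v-u) = 1"
  proof -
    have g: "cheb_U (Suc m + 0) * cheb_U (Suc m + 0) - cheb_U m * cheb_U (Suc (Suc m) + 0 + 0) =
      cheb_U 0 * (cheb_U 1 * cheb_U (Suc 0) - cheb_U 0 * (cheb_U (Suc (Suc 0)) :: 'a poly))"
      by (rule generic[OF RR_U RR_U RR_U U0 U1])
    have "cheb_U 1 * cheb_U (Suc 0) - cheb_U 0 * (cheb_U (Suc (Suc 0)) :: 'a poly) = 1"
      by simp
    with g have "cheb_U (Suc m) * cheb_U (Suc m) - cheb_U m * (cheb_U (Suc (Suc m)) :: 'a poly) = 1"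
      by simp
    then show ?thesis unfolding fU2 u_def v_def .
  qed
  note A = alg5[OF C]
  have sq: "x^2 = x*x" by (simp add: power2_eq_square)
  have base0: "cheb_T (Suc m) * cheb_T (k + Suc m) - e * cheb_U (k + m) = cheb_T k * cheb_T 0" for k
  proof (rule RR_uniq[OF RR_comb[OF RR_T RR_U] RR_mult[OF RR_T]])
    show "cheb_T (Suc m) * cheb_T (0 + Suc m) - e * cheb_U (0 + m) = cheb_T 0 * cheb_T 0"
      using A(1) unfolding e_def T0 sq by (simp add: fT1 ac_simps u_def[symmetric] del: cheb_T.simps cheb_U.simps)
    show "cheb_T (Suc m) * cheb_T (1 + Suc m) - e * cheb_U (1 + m) = cheb_T 1 * cheb_T 0"
      using A(2) unfolding e_def T0 T1 sq by (simp add: fT1 fT2 ac_simps u_def[symmetric] v_def[symmetric] del: cheb_T.simps cheb_U.simps)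
  qed
  have base1: "cheb_T (Suc (Suc m)) * cheb_T (k + Suc m) - e * cheb_U (k + Suc m) = cheb_T k * cheb_T 1" for k
  proof (rule RR_uniq[OF RR_comb[OF RR_T RR_U] RR_mult[OF RR_T]])
    show "cheb_T (Suc (Suc m)) * cheb_T (0 + Suc m) - e * cheb_U (0 + Suc m) = cheb_T 0 * cheb_T 1"
      using A(3) unfolding e_def T0 T1 sq by (simp add: fT1 fT2 ac_simps u_def[symmetric] v_def[symmetric] del: cheb_T.simps cheb_U.simps)
    show "cheb_T (Suc (Suc m)) * cheb_T (1 + Suc m) - e * cheb_U (1 + Suc m) = cheb_T 1 * cheb_T 1"
      using A(4) unfolding e_def T0 T1 sq by (simp add: fT1 fT2 fU2 ac_simps u_def[symmetric] v_def[symmetric] del: cheb_T.simps cheb_U.simps)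
  qed
  have "cheb_T (Suc m + j) * cheb_T (i + Suc m) - e * cheb_U (i + (m + j)) = cheb_T i * cheb_T j"
  proof (rule RR_uniq[OF RR_comb[OF RR_T RR_U] RR_mult[OF RR_T]])
    show "cheb_T (Suc m + j) * cheb_T (0 + Suc m) - e * cheb_U (0 + (m + j)) = cheb_T 0 * cheb_T j"
      using base0[of j] by (simp add: ac_simps)
    show "cheb_T (Suc m + j) * cheb_T (1 + Suc m) - e * cheb_U (1 + (m + j)) = cheb_T 1 * cheb_T j"
      using base1[of j] by (simp add: ac_simps)
  qed
  then show ?thesis unfolding e_def u_def x_def by (simp add: ac_simps)
qed


theorem theorem2p1:
  fixes n i j :: nat
  assumes "n \<ge> 1"
  shows "((cheb_U (n+i) * cheb_U (n+j) - cheb_U (n-1) * cheb_U (n+1+i+j)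
            :: 'a::comm_ring_1 poly) = cheb_U i * cheb_U j) \<and>
         ((cheb_T (n+i) * cheb_T (n+j) - cheb_T (n-1) * cheb_T (n+1+i+j)
            :: 'a::comm_ring_1 poly) = (1 - [:0,1:]^2) * cheb_U i * cheb_U j) \<and>
         ((cheb_T (n+i) * cheb_U (n+j) - cheb_U (n-1) * cheb_T (n+1+i+j)
            :: 'a::comm_ring_1 poly) = cheb_T i * cheb_U j) \<and>
         ((cheb_T (n+i) * cheb_U (n+j) - cheb_T (n-1) * cheb_U (n+1+i+j)
            :: 'a::comm_ring_1 poly) = - (cheb_U i * cheb_T (j+2))) \<and>
         ((cheb_T (n+i) * cheb_T (n+j) - ([:0,1:]^2 - 1) * cheb_U (n-1) * cheb_U (n-1+i+j)
            :: 'a::comm_ring_1 poly) = cheb_T i * cheb_T j)"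
proof -
  obtain m where n: "n = Suc m" using assms by (cases n) auto
  have i1: "n + 1 + i + j = Suc (Suc m) + i + j" and i2: "n - 1 = m" and i3: "n - 1 + i + j = m + i + j"
    and i4: "n + i = Suc m + i" and i5: "n + j = Suc m + j"
    using n by simp_all
  show ?thesis unfolding i1 i2 i3 i4 i5 using ids14[of m i j, where 'a='a] id5[of m i j, where 'a='a]
    by blast
qed

end
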